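(* Assume $X\in\mathbb{R}^p$, $C\ge 0$, $T\ge 0$, and let $P_{(X,C)}$ be any given distribution of $(X,C)$. Let $\hat L(\cdot)$ be a lower prediction bound built from observed data $(X_i,C_i,\widetilde T_i)_{i=1}^n$, $\widetilde T_i=\min(T_i,C_i)$, where $(X_i,C_i,T_i)$ are i.i.d. copies of $(X,C,T)$. If $\hat L$ satisfies \[\mathbb{P}\big(T\ge \hat L(X)\mid X=x\big)\ge 1-\alpha\] uniformly for all joint distributions of $(X,C,T)$ with $(X,C)\sim P_{(X,C)}$, then for all such distributions, \[\mathbb{P}(\hat L(x)=0)\ge 1-\alpha\] at almost all points $x$ (with respect to $P_X$) aside from the atoms of $P_X$.
   Context: In the conditional coverage criterion, the probability is over the data used to build $\hat L$ and over a new unit $(X,C,T)$, independent of the data, conditional on $X=x$. $P_X$ denotes the marginal distribution of $X$ under $P_{(X,C)}$. *)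

theory Defs
  imports "HOL-Probability.Probability"
begin

type_synonym 'p obs = "(real ^ 'p) \<times> real \<times> real"
  \<comment> \<open>an observed triple (X_i, C_i, min(T_i, C_i))\<close>

type_synonym 'p dataset = "nat \<Rightarrow> 'p obs"
  \<comment> \<open>a data set, indexed by i < n (element of PiM {..<n})\<close>

definition admissible_joint ::
  "((real ^ 'p) \<times> real) measure \<Rightarrow> ((real ^ 'p) \<times> real \<times> real) measure \<Rightarrow> bool" where
  "admissible_joint PXC \<mu> \<longleftrightarrow>
     prob_space \<mu> \<and> sets \<mu> = sets borel \<and>
     distr \<mu> borel (\<lambda>(x, c, t). (x, c)) = PXC \<and>
     (AE u in \<mu>. snd (snd u) \<ge> 0)"

definition obs_law :: "((real ^ 'p) \<times> real \<times> real) measure \<Rightarrow> 'p obs measure" where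
  "obs_law \<mu> = distr \<mu> borel (\<lambda>(x, c, t). (x, c, min t c))"

definition data_law :: "nat \<Rightarrow> ((real ^ 'p) \<times> real \<times> real) measure \<Rightarrow> 'p dataset measure" where
  "data_law n \<mu> = PiM {..<n} (\<lambda>_. obs_law \<mu>)"

definition full_law :: "nat \<Rightarrow> ((real ^ 'p) \<times> real \<times> real) measure
    \<Rightarrow> ('p dataset \<times> ((real ^ 'p) \<times> real \<times> real)) measure" where
  "full_law n \<mu> = data_law n \<mu> \<Otimes>\<^sub>M \<mu>"

text \<open>Conditional coverage: P(T \<ge> Lhat(X) | X) \<ge> 1 - alpha almost surely, i.e.
  P(T \<ge> Lhat(X) | X = x) \<ge> 1 - alpha for P_X-almost every x, where the probability is
  over the data and the new unit (X, C, T) and conditioning is on the new unit's X.\<close>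
definition cond_coverage ::
  "nat \<Rightarrow> ('p dataset \<Rightarrow> real ^ 'p \<Rightarrow> real) \<Rightarrow> real \<Rightarrow> ((real ^ 'p) \<times> real \<times> real) measure \<Rightarrow> bool" where
  "cond_coverage n Lhat \<alpha> \<mu> \<longleftrightarrow>
     (let M = full_law n \<mu>;
          F = vimage_algebra (space M) (\<lambda>(D, (x, c, t)). x) borel;
          cover = (\<lambda>(D, (x, c, t)). if t \<ge> Lhat D x then 1 else (0::real))
      in AE \<omega> in M. real_cond_exp M F cover \<omega> \<ge> 1 - \<alpha>)"

end

theory Submission
  imports Defs
begin

lemma m1: "(\<lambda>(x::real^'p,c::real,t::real). (x,c)) \<in> borel \<rightarrow>\<^sub>M borel"
  unfolding borel_prod[symmetric] by measurable
lemma m2: "(fst :: (real^'p) \<times> real \<Rightarrow> _) \<in> borel \<rightarrow>\<^sub>M borel"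
  unfolding borel_prod[symmetric] by measurable
lemma m2': "(fst :: (real^'p) \<times> real \<times> real \<Rightarrow> _) \<in> borel \<rightarrow>\<^sub>M borel"
  unfolding borel_prod[symmetric] by measurable
lemma m3: assumes [measurable]: "B \<in> sets borel" shows "(\<lambda>(x::real^'p, c::real, t::real). (x, c, if x \<in> B then 0 else t)) \<in> borel \<rightarrow>\<^sub>M borel"
  unfolding borel_prod[symmetric] by measurable
lemma m4: assumes [measurable]: "B \<in> sets borel" shows "(\<lambda>(x::real^'p, c::real, s::real). (x, c, if x \<in> B then min 0 c else s)) \<in> borel \<rightarrow>\<^sub>M borel"
  unfolding borel_prod[symmetric] by measurable
lemma m5: "(\<lambda>(x::real^'p, c::real, t::real). (x, c, min t c)) \<in> borel \<rightarrow>\<^sub>M borel"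
  unfolding borel_prod[symmetric] by measurable
lemma m6: assumes [measurable]: "B \<in> sets borel" shows "Measurable.pred borel (\<lambda>u::(real^'p)\<times>real\<times>real. fst u \<in> B \<and> snd (snd u) \<noteq> 0)"
  unfolding borel_prod[symmetric] by measurable
lemma m8: "(\<lambda>u::(real^'p)\<times>real\<times>real. snd (snd u)) \<in> borel \<rightarrow>\<^sub>M borel"
  unfolding borel_prod[symmetric] by measurable
lemma m6': assumes [measurable]: "B \<in> sets borel" shows "{u::(real^'p)\<times>real\<times>real. fst u \<in> B \<and> snd (snd u) \<noteq> 0} \<in> sets borel"
  using m6[OF assms] by (simp add: pred_def)
lemma m7: "{u::(real^'p)\<times>real\<times>real. u \<in> space borel \<and> 0 \<le> snd (snd u)} \<in> sets borel"
proof -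
  have "Measurable.pred borel (\<lambda>u::(real^'p)\<times>real\<times>real. 0 \<le> snd (snd u))"
    unfolding borel_prod[symmetric] by measurable
  thus ?thesis by (simp add: pred_def)
qed

lemma coupling:
  fixes \<mu> :: "((real^'p) \<times> real \<times> real) measure" and Lhat :: "'p dataset \<Rightarrow> real^'p \<Rightarrow> real"
  assumes p\<mu>: "prob_space \<mu>" and s\<mu>: "sets \<mu> = sets borel" and B[measurable]: "B \<in> sets borel"
    and Lx: "(\<lambda>D. Lhat D x) \<in> borel_measurable (PiM {..<n} (\<lambda>_. borel))"
  shows "emeasure (data_law n (distr \<mu> borel (\<lambda>(x, c, t). (x, c, if x \<in> B then 0 else t))))
            {D\<in>space (data_law n (distr \<mu> borel (\<lambda>(x, c, t). (x, c, if x \<in> B then 0 else t)))). Lhat D x = 0}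
         \<le> emeasure (data_law n \<mu>) {D\<in>space (data_law n \<mu>). Lhat D x = 0}
            + ennreal (real n * measure (distr \<mu> borel fst) B)"
proof -
  interpret P\<mu>: prob_space \<mu> by fact
  define h where "h = (\<lambda>(x::real^'p, c::real, t::real). (x, c, if x \<in> B then 0 else t))"
  define k where "k = (\<lambda>(x::real^'p, c::real, t::real). (x, c, min t c))"
  define g where "g = (\<lambda>(x::real^'p, c::real, s::real). (x, c, if x \<in> B then min 0 c else s))"
  have hm: "h \<in> \<mu> \<rightarrow>\<^sub>M borel" unfolding h_def using m3[OF B] measurable_cong_sets[OF s\<mu> refl] by blast
  have hm': "h \<in> borel \<rightarrow>\<^sub>M borel" unfolding h_def using m3[OF B] by blast
  have km: "k \<in> \<mu> \<rightarrow>\<^sub>M borel" unfolding k_def using m5 measurable_cong_sets[OF s\<mu> refl] by blast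
  have km': "k \<in> borel \<rightarrow>\<^sub>M borel" unfolding k_def using m5 by blast
  have gm': "g \<in> borel \<rightarrow>\<^sub>M borel" unfolding g_def using m4[OF B] by blast
  define Ob where "Ob = obs_law \<mu>"
  define Ob' where "Ob' = obs_law (distr \<mu> borel h)"
  have Ob_def': "Ob = distr \<mu> borel k" unfolding Ob_def obs_law_def k_def ..
  have sO: "sets Ob = sets borel" and sO': "sets Ob' = sets borel" unfolding Ob_def Ob'_def obs_law_def by simp_all
  have pO: "prob_space Ob" unfolding Ob_def' by (rule P\<mu>.prob_space_distr[OF km])
  have pO': "prob_space Ob'" unfolding Ob'_def obs_law_def
    by (rule prob_space.prob_space_distr[OF P\<mu>.prob_space_distr[OF hm]]) (use m5 in simp)
  have Ob'_eq: "Ob' = distr Ob borel g"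
  proof -
    have "Ob' = distr (distr \<mu> borel h) borel k" unfolding Ob'_def obs_law_def k_def ..
    also have "\<dots> = distr \<mu> borel (k \<circ> h)" by (rule distr_distr[OF km' hm])
    also have "\<dots> = distr \<mu> borel (g \<circ> k)"
      by (rule distr_cong) (auto simp: h_def k_def g_def case_prod_beta)
    also have "\<dots> = distr Ob borel g" unfolding Ob_def' by (rule distr_distr[OF gm' km, symmetric])
    finally show ?thesis .
  qed
  have gm: "g \<in> Ob \<rightarrow>\<^sub>M Ob'" using gm' measurable_cong_sets[OF sO sO'] by blast
  define I where "I = {..<n}"
  define D where "D = data_law n \<mu>"
  define D' where "D' = data_law n (distr \<mu> borel h)"
  have D_def': "D = PiM I (\<lambda>_. Ob)" unfolding D_def data_law_def I_def Ob_def ..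
  have D'_def': "D' = PiM I (\<lambda>_. Ob')" unfolding D'_def data_law_def I_def Ob'_def ..
  have pD: "prob_space D" unfolding D_def' by (rule prob_space_PiM) (use pO in auto)
  have D'_eq: "D' = distr D D' (compose I g)"
  proof -
    have "distr D D' (compose I g) = PiM I (\<lambda>i. distr Ob Ob' g)"
      unfolding D_def' D'_def' by (rule distr_PiM_finite_prob_space') (use pO pO' gm in \<open>auto simp: I_def\<close>)
    also have "(\<lambda>i. distr Ob Ob' g) = (\<lambda>i. Ob')" using Ob'_eq
      by (intro ext) (metis distr_cong sO')
    finally show ?thesis unfolding D'_def' by simp
  qed
  have cm: "compose I g \<in> D \<rightarrow>\<^sub>M D'"
    unfolding compose_def D_def' D'_def'
    by (rule measurable_restrict, rule measurable_compose[OF _ gm], rule measurable_component_singleton, assumption)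
  have sD: "sets D = sets (PiM {..<n} (\<lambda>_. borel))" unfolding D_def' I_def by (rule sets_PiM_cong) (auto simp: sO)
  have sD': "sets D' = sets (PiM {..<n} (\<lambda>_. borel))" unfolding D'_def' I_def by (rule sets_PiM_cong) (auto simp: sO')
  have LxD: "(\<lambda>D. Lhat D x) \<in> borel_measurable D" using Lx measurable_cong_sets[OF sD refl] by blast
  have LxD': "(\<lambda>D. Lhat D x) \<in> borel_measurable D'" using Lx measurable_cong_sets[OF sD' refl] by blast
  define E' where "E' = {D\<in>space D'. Lhat D x = 0}"
  define E where "E = {D0\<in>space D. Lhat D0 x = 0}"
  define S where "S = (\<lambda>i. {D0\<in>space D. fst (D0 i) \<in> B})"
  have E'm: "E' \<in> sets D'" unfolding E'_def using LxD' by measurable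
  have Em: "E \<in> sets D" unfolding E_def using LxD by measurable
  have Sm: "S i \<in> sets D" if "i \<in> I" for i
  proof -
    have "(\<lambda>D0. D0 i) \<in> D \<rightarrow>\<^sub>M Ob" unfolding D_def' using that by (rule measurable_component_singleton)
    moreover have "fst \<in> Ob \<rightarrow>\<^sub>M borel" using m2' measurable_cong_sets[OF sO refl] by blast
    ultimately have "(\<lambda>D0. fst (D0 i)) \<in> D \<rightarrow>\<^sub>M borel" by (rule measurable_compose)
    thus ?thesis unfolding S_def by measurable
  qed
  have sub: "compose I g -` E' \<inter> space D \<subseteq> E \<union> (\<Union>i\<in>I. S i)"
  proof
    fix D0 assume D0: "D0 \<in> compose I g -` E' \<inter> space D"
    show "D0 \<in> E \<union> (\<Union>i\<in>I. S i)"
    proof (cases "\<exists>i\<in>I. fst (D0 i) \<in> B")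
      case True thus ?thesis using D0 unfolding S_def by auto
    next
      case False
      have ext: "D0 \<in> extensional I" using D0 unfolding D_def' by (auto simp: space_PiM PiE_def)
      have "compose I g D0 = D0"
      proof
        fix i show "compose I g D0 i = D0 i"
        proof (cases "i \<in> I")
          case True
          then show ?thesis using False unfolding compose_def g_def
            by (cases "D0 i") auto
        next
          case False then show ?thesis using ext unfolding compose_def by (auto simp: extensional_def)
        qed
      qed
      thus ?thesis using D0 unfolding E'_def E_def by auto
    qed
  qed
  have spO: "space Ob = UNIV" using sets_eq_imp_space_eq[OF sO] by simp
  have fB: "fst -` B \<in> sets Ob" using measurable_sets[OF m2' B] sO by simp
  have fm\<mu>: "fst \<in> \<mu> \<rightarrow>\<^sub>M borel" using m2' measurable_cong_sets[OF s\<mu> refl] by blast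
  define c where "c = measure (distr \<mu> borel fst) B"
  have c0: "0 \<le> c" unfolding c_def by simp
  have compS: "emeasure D (S i) = ennreal c" if "i \<in> I" for i
  proof -
    have "emeasure D (S i) = emeasure (distr D Ob (\<lambda>D0. D0 i)) (fst -` B)"
      by (subst emeasure_distr) (auto simp: S_def D_def' that spO fB intro!: measurable_component_singleton
           arg_cong[where f="emeasure _"])
    also have "\<dots> = emeasure Ob (fst -` B)" using distr_PiM_component[of I "\<lambda>_. Ob" i] pO that unfolding D_def' by simp
    also have "\<dots> = emeasure \<mu> (k -` (fst -` B) \<inter> space \<mu>)" unfolding Ob_def'
      by (rule emeasure_distr[OF km]) (use fB sO in simp)
    also have "k -` (fst -` B) \<inter> space \<mu> = fst -` B \<inter> space \<mu>" by (auto simp: k_def)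
    also have "emeasure \<mu> (fst -` B \<inter> space \<mu>) = emeasure (distr \<mu> borel fst) B"
      by (rule emeasure_distr[symmetric, OF fm\<mu>]) simp
    also have "\<dots> = ennreal c" unfolding c_def
      by (rule finite_measure.emeasure_eq_measure[OF prob_space.finite_measure[OF P\<mu>.prob_space_distr[OF fm\<mu>]]])
    finally show ?thesis .
  qed
  have "emeasure D' E' = emeasure (distr D D' (compose I g)) E'" using D'_eq by (rule arg_cong)
  also have "\<dots> = emeasure D (compose I g -` E' \<inter> space D)" by (rule emeasure_distr[OF cm E'm])
  also have "\<dots> \<le> emeasure D (E \<union> (\<Union>i\<in>I. S i))"
    by (rule emeasure_mono[OF sub]) (use Em Sm in \<open>auto simp: I_def\<close>)
  also have "\<dots> \<le> emeasure D E + emeasure D (\<Union>i\<in>I. S i)"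
    by (rule emeasure_subadditive) (use Em Sm in \<open>auto simp: I_def\<close>)
  also have "emeasure D (\<Union>i\<in>I. S i) \<le> (\<Sum>i\<in>I. emeasure D (S i))"
    by (rule emeasure_subadditive_finite) (use Sm in \<open>auto simp: I_def\<close>)
  also have "(\<Sum>i\<in>I. emeasure D (S i)) = (\<Sum>i\<in>I. ennreal c)" by (rule sum.cong) (auto simp: compS)
  also have "\<dots> = ennreal (real n * c)"
    using c0 by (simp add: I_def ennreal_mult ennreal_of_nat_eq_real_of_nat)
  finally have fin: "emeasure D' E' \<le> emeasure D E + ennreal (real n * c)" by (simp add: add_left_mono)
  show ?thesis using fin unfolding E_def E'_def D_def D'_def h_def c_def .
qed

lemma slice_meas:
  fixes D :: "('p::finite) dataset measure" and Lhat :: "'p dataset \<Rightarrow> real^'p \<Rightarrow> real"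
  assumes pD: "prob_space D" and sD: "sets D = sets (PiM {..<n} (\<lambda>_. borel))"
    and Lm: "(\<lambda>(D, x). Lhat D x) \<in> borel_measurable (PiM {..<n} (\<lambda>_. borel) \<Otimes>\<^sub>M borel)"
    and B[measurable]: "B \<in> sets borel"
  shows "(\<lambda>x::real^'p. indicator B x * emeasure D {d\<in>space D. Lhat d x = 0}) \<in> borel_measurable borel"
proof -
  interpret prob_space D by fact
  define Q where "Q = {p \<in> space (borel \<Otimes>\<^sub>M D). fst p \<in> B \<and> Lhat (snd p) (fst p) = 0}"
  have Lm': "(\<lambda>(d, x). Lhat d x) \<in> borel_measurable (D \<Otimes>\<^sub>M borel)"
    using Lm measurable_cong_sets[OF sets_pair_measure_cong[OF sD refl] refl] by blast
  have [measurable]: "(\<lambda>p. Lhat (snd p) (fst p)) \<in> borel_measurable (borel \<Otimes>\<^sub>M D)"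
    using measurable_compose[OF measurable_Pair[OF measurable_snd measurable_fst] Lm'] by simp
  have Qm: "Q \<in> sets (borel \<Otimes>\<^sub>M D)" unfolding Q_def by measurable
  have "(\<lambda>x. emeasure D (Pair x -` Q)) \<in> borel_measurable borel" by (rule measurable_emeasure_Pair[OF Qm])
  moreover have "(\<lambda>x::real^'p. indicator B x * emeasure D {d\<in>space D. Lhat d x = 0}) = (\<lambda>x. emeasure D (Pair x -` Q))"
    by (auto simp: fun_eq_iff indicator_def Q_def space_pair_measure)
  ultimately show ?thesis by simp
qed

lemma key:
  fixes PXC :: "((real ^ 'p) \<times> real) measure" and Lhat :: "'p dataset \<Rightarrow> real ^ 'p \<Rightarrow> real"
    and n :: nat and \<alpha> :: real and \<mu> B
  assumes PXC: "prob_space PXC" "sets PXC = sets borel"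
    and Lm: "(\<lambda>(D, x). Lhat D x) \<in> borel_measurable (PiM {..<n} (\<lambda>_. borel) \<Otimes>\<^sub>M borel)"
    and Lpos: "\<And>D x. Lhat D x \<ge> 0"
    and cov: "\<And>\<mu>. admissible_joint PXC \<mu> \<Longrightarrow> cond_coverage n Lhat \<alpha> \<mu>"
    and adm: "admissible_joint PXC \<mu>"
    and B[measurable]: "B \<in> sets borel"
  shows "ennreal ((1-\<alpha>) * measure (distr PXC borel fst) B) \<le>
     (\<integral>\<^sup>+x. indicator B x * emeasure (data_law n \<mu>) {D\<in>space (data_law n \<mu>). Lhat D x = 0} \<partial>distr PXC borel fst)
     + ennreal (real n * measure (distr PXC borel fst) B * measure (distr PXC borel fst) B)"
proof -
  have p\<mu>: "prob_space \<mu>" and s\<mu>[measurable_cong]: "sets \<mu> = sets borel"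
    and marg: "distr \<mu> borel (\<lambda>(x, c, t). (x, c)) = PXC"
    and tpos: "AE u in \<mu>. snd (snd u) \<ge> 0"
    using adm unfolding admissible_joint_def by auto
  interpret P\<mu>: prob_space \<mu> by fact
  have sp\<mu>: "space \<mu> = UNIV" using sets_eq_imp_space_eq[OF s\<mu>] by simp
  define \<nu> where "\<nu> = distr PXC borel fst"
  have \<nu>_eq: "\<nu> = distr \<mu> borel fst"
  proof -
    have "distr (distr \<mu> borel (\<lambda>(x, c, t). (x, c))) borel fst = distr \<mu> borel (fst \<circ> (\<lambda>(x, c, t). (x, c)))"
      by (rule distr_distr[OF m2 ]) (use m1 measurable_cong_sets[OF s\<mu> refl] in blast)
    also have "\<dots> = distr \<mu> borel fst" by (rule distr_cong) (auto simp: case_prod_beta)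
    finally show ?thesis unfolding \<nu>_def marg .
  qed
  define h where "h = (\<lambda>(x::real^'p, c::real, t::real). (x, c, if x \<in> B then 0 else t))"
  have hm': "h \<in> borel \<rightarrow>\<^sub>M borel" unfolding h_def using m3[OF B] by blast
  have hm: "h \<in> \<mu> \<rightarrow>\<^sub>M borel" using hm' measurable_cong_sets[OF s\<mu> refl] by blast
  define \<mu>' where "\<mu>' = distr \<mu> borel h"
  have p\<mu>': "prob_space \<mu>'" unfolding \<mu>'_def by (rule P\<mu>.prob_space_distr[OF hm])
  have s\<mu>'[measurable_cong]: "sets \<mu>' = sets borel" unfolding \<mu>'_def by simp
  have adm': "admissible_joint PXC \<mu>'"
    unfolding admissible_joint_def
  proof (intro conjI)
    show "prob_space \<mu>'" by fact
    show "sets \<mu>' = sets borel" by fact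
    show "distr \<mu>' borel (\<lambda>(x, c, t). (x, c)) = PXC"
    proof -
      have "distr (distr \<mu> borel h) borel (\<lambda>(x, c, t). (x, c)) = distr \<mu> borel ((\<lambda>(x, c, t). (x, c)) \<circ> h)"
        by (rule distr_distr[OF m1 hm])
      also have "\<dots> = distr \<mu> borel (\<lambda>(x, c, t). (x, c))" by (rule distr_cong) (auto simp: case_prod_beta h_def)
      finally show ?thesis unfolding \<mu>'_def marg .
    qed
    show "AE u in \<mu>'. snd (snd u) \<ge> 0"
    proof -
      have "AE u in \<mu>. 0 \<le> snd (snd (h u))"
        by (rule AE_mp[OF tpos], rule AE_I2) (auto simp: h_def split: prod.split)
      thus ?thesis unfolding \<mu>'_def using AE_distr_iff[OF hm m7] by simp
    qed
  qed
  have cc: "cond_coverage n Lhat \<alpha> \<mu>'" by (rule cov[OF adm'])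

  define c where "c = measure (distr PXC borel fst) B"
  have fm\<mu>': "fst \<in> \<mu>' \<rightarrow>\<^sub>M borel" using m2' measurable_cong_sets[OF s\<mu>' refl] by blast
  have \<nu>'_eq: "distr \<mu>' borel fst = \<nu>"
  proof -
    have "distr \<mu>' borel fst = distr \<mu> borel (fst \<circ> h)" unfolding \<mu>'_def by (rule distr_distr[OF m2' hm])
    also have "\<dots> = distr \<mu> borel fst" by (rule distr_cong) (auto simp: h_def split: prod.split)
    finally show ?thesis using \<nu>_eq by simp
  qed
  define D' where "D' = data_law n \<mu>'"
  define M' where "M' = full_law n \<mu>'"
  have M'_eq: "M' = D' \<Otimes>\<^sub>M \<mu>'" unfolding M'_def D'_def full_law_def ..
  have pO': "prob_space (obs_law \<mu>')" unfolding obs_law_def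
    by (rule prob_space.prob_space_distr[OF p\<mu>']) (use m5 measurable_cong_sets[OF s\<mu>' refl] in blast)
  have sO': "sets (obs_law \<mu>') = sets borel" unfolding obs_law_def by simp
  have pD': "prob_space D'" unfolding D'_def data_law_def by (rule prob_space_PiM) (use pO' in auto)
  have sD': "sets D' = sets (PiM {..<n} (\<lambda>_. borel))" unfolding D'_def data_law_def
    by (rule sets_PiM_cong) (auto simp: sO')
  interpret PD': prob_space D' by fact
  interpret P\<mu>': prob_space \<mu>' by fact
  interpret PP: pair_prob_space D' \<mu>' by unfold_locales
  have pM': "prob_space M'" unfolding M'_eq by (rule prob_space_pair[OF pD' p\<mu>'])
  interpret PM': prob_space M' by fact
  have sp\<mu>': "space \<mu>' = UNIV" using sets_eq_imp_space_eq[OF s\<mu>'] by simp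
  have spM': "space M' = space D' \<times> UNIV" unfolding M'_eq by (simp add: space_pair_measure sp\<mu>')
  have Xm[measurable]: "(\<lambda>\<omega>. fst (snd \<omega>)) \<in> M' \<rightarrow>\<^sub>M borel"
    unfolding M'_eq by (rule measurable_compose[OF measurable_snd fm\<mu>'])
  have Tm[measurable]: "(\<lambda>\<omega>. snd (snd (snd \<omega>))) \<in> M' \<rightarrow>\<^sub>M borel"
    unfolding M'_eq by (rule measurable_compose[OF measurable_snd]) (use m8 measurable_cong_sets[OF s\<mu>' refl] in blast)
  have Lm': "(\<lambda>(D, x). Lhat D x) \<in> borel_measurable (D' \<Otimes>\<^sub>M borel)"
    using Lm measurable_cong_sets[OF sets_pair_measure_cong[OF sD' refl] refl] by blast
  have Lc[measurable]: "(\<lambda>\<omega>. Lhat (fst \<omega>) (fst (snd \<omega>))) \<in> borel_measurable M'"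
  proof -
    have "(\<lambda>\<omega>. (fst \<omega>, fst (snd \<omega>))) \<in> M' \<rightarrow>\<^sub>M D' \<Otimes>\<^sub>M borel"
      by (rule measurable_Pair) (use Xm in \<open>simp_all add: M'_eq\<close>)
    from measurable_compose[OF this Lm'] show ?thesis by simp
  qed
  define F where "F = vimage_algebra (space M') (\<lambda>(D, (x, c, t)). x) borel"
  define cover where "cover = (\<lambda>(D, (x, c::real, t)). if t \<ge> Lhat D x then 1 else (0::real))"
  have AEc: "AE \<omega> in M'. real_cond_exp M' F cover \<omega> \<ge> 1 - \<alpha>"
    using cc unfolding cond_coverage_def Let_def F_def cover_def M'_def .
  have Fx: "(\<lambda>(D, (x, c, t)). x) = (\<lambda>\<omega>::('p dataset \<times> (real^'p) \<times> real \<times> real). fst (snd \<omega>))"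
    by (auto simp: fun_eq_iff)
  have cover_eq: "cover = (\<lambda>\<omega>. if snd (snd (snd \<omega>)) \<ge> Lhat (fst \<omega>) (fst (snd \<omega>)) then 1 else 0)"
    by (auto simp: cover_def fun_eq_iff)
  have cm[measurable]: "cover \<in> borel_measurable M'" unfolding cover_eq by measurable
  have sub: "subalgebra M' F" unfolding subalgebra_def F_def Fx
    using Xm[unfolded measurable_iff_sets] by auto
  interpret FS: finite_measure_subalgebra M' F
    by (intro finite_measure_subalgebra.intro finite_measure_subalgebra_axioms.intro PM'.finite_measure_axioms sub)
  define AS where "AS = (\<lambda>\<omega>. fst (snd \<omega>)) -` B \<inter> space M'"
  have ASF: "AS \<in> sets F" unfolding AS_def F_def Fx by (rule in_vimage_algebra[OF B])
  have ASM: "AS \<in> sets M'" unfolding AS_def by (rule measurable_sets[OF Xm B])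
  have icov: "integrable M' cover" by (rule PM'.integrable_const_bound[where B=1]) (auto simp: cover_eq)
  have icond: "integrable M' (real_cond_exp M' F cover)" by (rule FS.real_cond_exp_int(1)[OF icov])
  have step1: "(1 - \<alpha>) * measure M' AS \<le> (LINT \<omega>:AS|M'. real_cond_exp M' F cover \<omega>)"
  proof -
    have "(LINT \<omega>:AS|M'. (1 - \<alpha>)) = measure M' AS * (1 - \<alpha>)"
      by (simp add: set_integral_const ASM PM'.emeasure_finite)
    moreover have "(LINT \<omega>:AS|M'. (1 - \<alpha>)) \<le> (LINT \<omega>:AS|M'. real_cond_exp M' F cover \<omega>)"
    proof (rule set_integral_mono_AE)
      show "set_integrable M' AS (\<lambda>_. 1 - \<alpha>)" unfolding set_integrable_def
        by (rule integrable_mult_indicator[OF ASM]) simp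
      show "set_integrable M' AS (real_cond_exp M' F cover)" unfolding set_integrable_def
        by (rule integrable_mult_indicator[OF ASM icond])
      show "AE x\<in>AS in M'. 1 - \<alpha> \<le> real_cond_exp M' F cover x"
        by (rule AE_mp[OF AEc], rule AE_I2) auto
    qed
    ultimately show ?thesis by (simp add: mult.commute)
  qed
  have step2: "(LINT \<omega>:AS|M'. cover \<omega>) = (LINT \<omega>:AS|M'. real_cond_exp M' F cover \<omega>)"
    by (rule FS.real_cond_exp_intA[OF icov ASF])
  define E0 where "E0 = {\<omega>\<in>space M'. fst (snd \<omega>) \<in> B \<and> Lhat (fst \<omega>) (fst (snd \<omega>)) = 0}"
  define Bad where "Bad = space D' \<times> {u::(real^'p)\<times>real\<times>real. fst u \<in> B \<and> snd (snd u) \<noteq> 0}"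
  have E0m: "E0 \<in> sets M'" unfolding E0_def by measurable
  have BadN: "Bad \<in> null_sets M'"
  proof -
    have sm: "{u::(real^'p)\<times>real\<times>real. fst u \<in> B \<and> snd (snd u) \<noteq> 0} \<in> sets \<mu>'"
      using m6'[OF B] s\<mu>' by simp
    have "emeasure \<mu>' {u::(real^'p)\<times>real\<times>real. fst u \<in> B \<and> snd (snd u) \<noteq> 0}
        = emeasure \<mu> (h -` {u. fst u \<in> B \<and> snd (snd u) \<noteq> 0} \<inter> space \<mu>)"
      unfolding \<mu>'_def by (rule emeasure_distr[OF hm]) (use m6'[OF B] in simp)
    also have "h -` {u::(real^'p)\<times>real\<times>real. fst u \<in> B \<and> snd (snd u) \<noteq> 0} \<inter> space \<mu> = {}"
      by (auto simp: h_def split: prod.splits if_splits)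
    finally have "{u::(real^'p)\<times>real\<times>real. fst u \<in> B \<and> snd (snd u) \<noteq> 0} \<in> null_sets \<mu>'"
      using sm by (simp add: null_sets_def)
    thus ?thesis unfolding Bad_def M'_eq by (intro P\<mu>'.times_in_null_sets2) auto
  qed
  have step3: "(LINT \<omega>:AS|M'. cover \<omega>) \<le> measure M' E0"
  proof -
    have "(LINT \<omega>:AS|M'. cover \<omega>) \<le> (\<integral>\<omega>. indicator (E0 \<union> Bad) \<omega> \<partial>M')"
      unfolding set_lebesgue_integral_def
    proof (rule integral_mono)
      show "integrable M' (\<lambda>x. indicator AS x *\<^sub>R cover x)" by (rule integrable_mult_indicator[OF ASM icov])
      show "integrable M' (indicator (E0 \<union> Bad) :: _ \<Rightarrow> real)"
        using E0m BadN by (intro integrable_real_indicator) (auto simp: PM'.emeasure_finite less_top[symmetric])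
      fix \<omega> assume \<omega>: "\<omega> \<in> space M'"
      obtain D x c t where \<omega>eq: "\<omega> = (D, x, c, t)" by (cases \<omega>) auto
      show "indicator AS \<omega> *\<^sub>R cover \<omega> \<le> indicator (E0 \<union> Bad) \<omega>"
      proof (cases "x \<in> B \<and> t = 0")
        case True
        show ?thesis
        proof (cases "Lhat D x = 0")
          case True
          then have "\<omega> \<in> E0" using \<open>x \<in> B \<and> t = 0\<close> \<omega> by (auto simp: E0_def \<omega>eq)
          then show ?thesis by (auto simp: indicator_def cover_def \<omega>eq)
        next
          case False
          then have "Lhat D x > 0" using Lpos[of D x] by simp
          then show ?thesis using \<open>x \<in> B \<and> t = 0\<close> by (auto simp: indicator_def cover_def \<omega>eq)
        qed
      next
        case False
        show ?thesis
        proof (cases "x \<in> B")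
          case True
          with False have "\<omega> \<in> Bad" using \<omega> by (auto simp: Bad_def \<omega>eq spM')
          then show ?thesis by (auto simp: indicator_def cover_def \<omega>eq)
        next
          case False
          then show ?thesis by (auto simp: indicator_def AS_def \<omega>eq)
        qed
      qed
    qed
    also have "\<dots> = measure M' (E0 \<union> Bad)"
    proof -
      have "(E0 \<union> Bad) \<inter> space M' = E0 \<union> Bad" by (auto simp: E0_def Bad_def spM')
      thus ?thesis by simp
    qed
    also have "\<dots> = measure M' E0" by (rule measure_Un_null_set[OF E0m BadN])
    finally show ?thesis .
  qed
  have step4: "measure M' AS = c"
  proof -
    have "AS = space D' \<times> (fst -` B)" by (auto simp: AS_def spM')
    hence "emeasure M' AS = emeasure D' (space D') * emeasure \<mu>' (fst -` B)"
      unfolding M'_eq using measurable_sets[OF fm\<mu>' B]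
      by (simp add: P\<mu>'.emeasure_pair_measure_Times sp\<mu>')
    also have "emeasure \<mu>' (fst -` B) = emeasure (distr \<mu>' borel fst) B"
      using emeasure_distr[OF fm\<mu>' B] by (simp add: sp\<mu>')
    finally have "emeasure M' AS = emeasure \<nu> B" using \<nu>'_eq PD'.emeasure_space_1 by simp
    thus ?thesis unfolding c_def \<nu>_def[symmetric] by (simp add: measure_def)
  qed

  define D\<mu> where "D\<mu> = data_law n \<mu>"
  have pO: "prob_space (obs_law \<mu>)" unfolding obs_law_def
    by (rule P\<mu>.prob_space_distr) (use m5 measurable_cong_sets[OF s\<mu> refl] in blast)
  have sO: "sets (obs_law \<mu>) = sets borel" unfolding obs_law_def by simp
  have pD\<mu>: "prob_space D\<mu>" unfolding D\<mu>_def data_law_def by (rule prob_space_PiM) (use pO in auto)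
  have sD\<mu>: "sets D\<mu> = sets (PiM {..<n} (\<lambda>_. borel))" unfolding D\<mu>_def data_law_def
    by (rule sets_PiM_cong) (auto simp: sO)
  define G' where "G' = (\<lambda>x. indicator B x * emeasure D' {d\<in>space D'. Lhat d x = 0})"
  define G where "G = (\<lambda>x. indicator B x * emeasure D\<mu> {d\<in>space D\<mu>. Lhat d x = 0})"
  have G'm: "G' \<in> borel_measurable borel" unfolding G'_def by (rule slice_meas[OF pD' sD' Lm B])
  have Gm: "G \<in> borel_measurable borel" unfolding G_def by (rule slice_meas[OF pD\<mu> sD\<mu> Lm B])
  have step5: "emeasure M' E0 = (\<integral>\<^sup>+x. G' x \<partial>\<nu>)"
  proof -
    have "emeasure M' E0 = (\<integral>\<^sup>+u. emeasure D' ((\<lambda>d. (d, u)) -` E0) \<partial>\<mu>')"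
      unfolding M'_eq by (rule PP.emeasure_pair_measure_alt2) (use E0m in \<open>simp add: M'_eq\<close>)
    also have "\<dots> = (\<integral>\<^sup>+u. G' (fst u) \<partial>\<mu>')"
    proof (rule nn_integral_cong)
      fix u :: "(real^'p) \<times> real \<times> real"
      have "(\<lambda>d. (d, u)) -` E0 = (if fst u \<in> B then {d\<in>space D'. Lhat d (fst u) = 0} else {})"
        by (auto simp: E0_def spM')
      thus "emeasure D' ((\<lambda>d. (d, u)) -` E0) = G' (fst u)"
        by (simp add: G'_def)
    qed
    also have "\<dots> = (\<integral>\<^sup>+x. G' x \<partial>distr \<mu>' borel fst)"
      by (rule nn_integral_distr[OF fm\<mu>', symmetric]) (use G'm in simp)
    finally show ?thesis using \<nu>'_eq by simp
  qed
  have c0: "0 \<le> c" unfolding c_def by simp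
  have step6: "G' x \<le> G x + ennreal (real n * c) * indicator B x" for x
  proof -
    have Lx: "(\<lambda>D. Lhat D x) \<in> borel_measurable (PiM {..<n} (\<lambda>_. borel))"
      using measurable_compose[OF measurable_Pair[OF measurable_id measurable_const[of x borel]] Lm] by simp
    have "emeasure D' {d\<in>space D'. Lhat d x = 0} \<le> emeasure D\<mu> {d\<in>space D\<mu>. Lhat d x = 0} + ennreal (real n * c)"
      using coupling[where \<mu>=\<mu> and Lhat=Lhat and x=x and n=n and B=B, OF p\<mu> s\<mu> B Lx] unfolding D'_def D\<mu>_def \<mu>'_def h_def c_def \<nu>_def[symmetric] \<nu>_eq .
    thus ?thesis unfolding G'_def G_def by (cases "x \<in> B") auto
  qed
  have p\<nu>: "prob_space \<nu>" unfolding \<nu>_def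
    by (rule prob_space.prob_space_distr[OF PXC(1)]) (use m2 measurable_cong_sets[OF PXC(2) refl] in blast)
  have s\<nu>: "sets \<nu> = sets borel" unfolding \<nu>_def by simp
  have e\<nu>: "emeasure \<nu> B = ennreal c" unfolding c_def \<nu>_def[symmetric]
    by (rule finite_measure.emeasure_eq_measure[OF prob_space.finite_measure[OF p\<nu>]])
  have step7: "(\<integral>\<^sup>+x. G' x \<partial>\<nu>) \<le> (\<integral>\<^sup>+x. G x \<partial>\<nu>) + ennreal (real n * c * c)"
  proof -
    have "(\<integral>\<^sup>+x. G' x \<partial>\<nu>) \<le> (\<integral>\<^sup>+x. G x + ennreal (real n * c) * indicator B x \<partial>\<nu>)"
      by (rule nn_integral_mono) (rule step6)
    also have "\<dots> = (\<integral>\<^sup>+x. G x \<partial>\<nu>) + (\<integral>\<^sup>+x. ennreal (real n * c) * indicator B x \<partial>\<nu>)"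
      by (rule nn_integral_add) (use Gm s\<nu> in \<open>auto simp: measurable_cong_sets[OF s\<nu> refl]\<close>)
    also have "(\<integral>\<^sup>+x. ennreal (real n * c) * indicator B x \<partial>\<nu>) = ennreal (real n * c) * emeasure \<nu> B"
      by (rule nn_integral_cmult_indicator) (simp add: s\<nu>)
    also have "\<dots> = ennreal (real n * c * c)" using c0 by (simp add: e\<nu> ennreal_mult)
    finally show ?thesis .
  qed
  have "(1 - \<alpha>) * c \<le> measure M' E0" using step1 step2 step3 step4 by simp
  hence "ennreal ((1 - \<alpha>) * c) \<le> ennreal (measure M' E0)" by (rule ennreal_leI)
  also have "\<dots> = emeasure M' E0" by (simp add: PM'.emeasure_eq_measure)
  also note step5
  also note step7
  finally show ?thesis unfolding c_def G_def D\<mu>_def \<nu>_def .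
qed

lemma small_set:
  fixes \<nu> :: "'a::{second_countable_topology, metric_space} measure"
  assumes fm: "finite_measure \<nu>" and sb: "sets \<nu> = sets borel" and A: "A \<in> sets borel"
    and pos: "measure \<nu> A > 0" and na: "\<And>x. x \<in> A \<Longrightarrow> measure \<nu> {x} = 0" and eps: "\<epsilon> > 0"
  shows "\<exists>B\<in>sets borel. B \<subseteq> A \<and> 0 < measure \<nu> B \<and> measure \<nu> B < \<epsilon>"
proof -
  interpret finite_measure \<nu> by fact
  obtain \<B> :: "'a set set" where cB: "countable \<B>" and oB: "\<And>C. C \<in> \<B> \<Longrightarrow> open C"
    and bB: "\<And>S. open S \<Longrightarrow> \<exists>U. U \<subseteq> \<B> \<and> S = \<Union>U"
    using univ_second_countable by blast
  have Am: "A \<in> sets \<nu>" using A sb by simp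
  have Bm: "C \<in> sets \<nu>" if "C \<in> \<B>" for C using oB[OF that] sb by simp
  define Z where "Z = (\<Union>U\<in>{U\<in>\<B>. measure \<nu> (A \<inter> U) = 0}. A \<inter> U)"
  have Znull: "Z \<in> null_sets \<nu>"
    unfolding Z_def
    by (rule null_sets_UN') (use cB Am Bm in \<open>auto simp: emeasure_eq_measure null_sets_def\<close>)
  hence AZ: "measure \<nu> (A - Z) = measure \<nu> A"
    by (simp add: Am measure_Diff_null_set)
  have "A - Z \<noteq> {}"
  proof
    assume "A - Z = {}"
    with AZ pos show False by simp
  qed
  then obtain x where xA: "x \<in> A" and xZ: "x \<notin> Z" by auto
  define S where "S = (\<lambda>k::nat. A \<inter> ball x (1 / Suc k))"
  have Sm: "S k \<in> sets \<nu>" for k unfolding S_def using Am sb by auto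
  have dec: "decseq S"
    unfolding S_def decseq_def
  proof (intro allI impI)
    fix m n :: nat assume "m \<le> n"
    hence "1 / real (Suc n) \<le> 1 / real (Suc m)" by (simp add: frac_le)
    thus "A \<inter> ball x (1 / real (Suc n)) \<subseteq> A \<inter> ball x (1 / real (Suc m))" by auto
  qed
  have inter: "(\<Inter>k. S k) = {x}"
  proof
    show "{x} \<subseteq> (\<Inter>k. S k)" using xA by (auto simp: S_def)
    show "(\<Inter>k. S k) \<subseteq> {x}"
    proof
      fix y assume y: "y \<in> (\<Inter>k. S k)"
      have "dist x y = 0"
      proof (rule ccontr)
        assume "dist x y \<noteq> 0"
        hence d: "dist x y > 0" by simp
        obtain k :: nat where "1 / Suc k < dist x y"
          using reals_Archimedean[OF d] by (metis inverse_eq_divide of_nat_Suc)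
        moreover have "y \<in> S k" using y by auto
        ultimately show False by (auto simp: S_def)
      qed
      thus "y \<in> {x}" by simp
    qed
  qed
  have "(\<lambda>k. measure \<nu> (S k)) \<longlonglongrightarrow> measure \<nu> (\<Inter>k. S k)"
    by (rule finite_Lim_measure_decseq) (use Sm dec in auto)
  hence "(\<lambda>k. measure \<nu> (S k)) \<longlonglongrightarrow> 0" using inter na[OF xA] by simp
  from order_tendstoD(2)[OF this eps] obtain N where N: "\<forall>k\<ge>N. measure \<nu> (S k) < \<epsilon>"
    by (auto simp: eventually_sequentially)
  define k where "k = N"
  have k: "measure \<nu> (S k) < \<epsilon>" using N by (simp add: k_def)
  have ob: "open (ball x (1 / Suc k))" by simp
  obtain U where U: "U \<subseteq> \<B>" "ball x (1 / Suc k) = \<Union>U" using bB[OF ob] by blast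
  have xb: "x \<in> ball x (1 / Suc k)" by simp
  hence "x \<in> \<Union>U" unfolding U(2) .
  then obtain V where VU: "V \<in> U" "x \<in> V" by blast
  hence V: "V \<in> \<B>" "x \<in> V" "V \<subseteq> ball x (1 / Suc k)" using U by auto
  have "measure \<nu> (A \<inter> V) \<noteq> 0" using xZ xA V unfolding Z_def by auto
  moreover have "measure \<nu> (A \<inter> V) \<le> measure \<nu> (S k)"
    by (rule finite_measure_mono) (use V Sm in \<open>auto simp: S_def\<close>)
  moreover have "0 \<le> measure \<nu> (A \<inter> V)" by simp
  ultimately have p1: "0 < measure \<nu> (S k)" by linarith
  have p2: "S k \<in> sets borel" using Sm sb by simp
  have p3: "S k \<subseteq> A" by (auto simp: S_def)
  show ?thesis by (rule bexI[of _ "S k", OF _ p2]) (use p1 p3 k in simp)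
qed


theorem theorem5:
  fixes PXC :: "((real ^ 'p) \<times> real) measure"
    and n :: nat
    and Lhat :: "'p dataset \<Rightarrow> real ^ 'p \<Rightarrow> real"
    and \<alpha> :: real
  assumes "prob_space PXC" and "sets PXC = sets borel"
    and "AE u in PXC. snd u \<ge> 0"
    and "0 < \<alpha>" and "\<alpha> < 1"
    and "(\<lambda>(D, x). Lhat D x) \<in> borel_measurable (PiM {..<n} (\<lambda>_. borel) \<Otimes>\<^sub>M borel)"
    and "\<And>D x. Lhat D x \<ge> 0"
    and "\<And>\<mu>. admissible_joint PXC \<mu> \<Longrightarrow> cond_coverage n Lhat \<alpha> \<mu>"
  shows "\<And>\<mu>. admissible_joint PXC \<mu> \<Longrightarrow>
           (AE x in distr PXC borel fst.
              measure (distr PXC borel fst) {x} = 0 \<longrightarrow>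
              measure (data_law n \<mu>) {D \<in> space (data_law n \<mu>). Lhat D x = 0} \<ge> 1 - \<alpha>)"
proof -
  fix \<mu> assume adm: "admissible_joint PXC \<mu>"
  note PXC = assms(1,2) and Lm = assms(6) and Lpos = assms(7) and cov = assms(8)
  have p\<mu>: "prob_space \<mu>" and s\<mu>: "sets \<mu> = sets borel"
    using adm unfolding admissible_joint_def by auto
  define \<nu> where "\<nu> = distr PXC borel fst"
  have p\<nu>: "prob_space \<nu>" unfolding \<nu>_def
    by (rule prob_space.prob_space_distr[OF PXC(1)]) (use m2 measurable_cong_sets[OF PXC(2) refl] in blast)
  have s\<nu>: "sets \<nu> = sets borel" unfolding \<nu>_def by simp
  have sp\<nu>: "space \<nu> = UNIV" using sets_eq_imp_space_eq[OF s\<nu>] by simp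
  interpret P\<nu>: prob_space \<nu> by fact
  define D\<mu> where "D\<mu> = data_law n \<mu>"
  have pO: "prob_space (obs_law \<mu>)" unfolding obs_law_def
    by (rule prob_space.prob_space_distr[OF p\<mu>]) (use m5 measurable_cong_sets[OF s\<mu> refl] in blast)
  have sO: "sets (obs_law \<mu>) = sets borel" unfolding obs_law_def by simp
  have pD\<mu>: "prob_space D\<mu>" unfolding D\<mu>_def data_law_def by (rule prob_space_PiM) (use pO in auto)
  have sD\<mu>: "sets D\<mu> = sets (PiM {..<n} (\<lambda>_. borel))" unfolding D\<mu>_def data_law_def
    by (rule sets_PiM_cong) (auto simp: sO)
  interpret PD: prob_space D\<mu> by fact
  define f where "f = (\<lambda>x. measure D\<mu> {D \<in> space D\<mu>. Lhat D x = 0})"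
  have fm: "f \<in> borel_measurable borel"
  proof -
    have "(\<lambda>x::real^'p. indicator UNIV x * emeasure D\<mu> {d\<in>space D\<mu>. Lhat d x = 0}) \<in> borel_measurable borel"
      by (rule slice_meas[OF pD\<mu> sD\<mu> Lm]) simp
    hence "(\<lambda>x::real^'p. enn2real (emeasure D\<mu> {d\<in>space D\<mu>. Lhat d x = 0})) \<in> borel_measurable borel"
      by simp
    thus ?thesis unfolding f_def measure_def .
  qed
  have f0: "0 \<le> f x" for x unfolding f_def by simp
  define Nat where "Nat = {x. measure \<nu> {x} = 0}"
  have Natm: "Nat \<in> sets borel"
  proof -
    have "{x. measure \<nu> {x} \<noteq> 0} \<in> sets borel"
      by (rule sets.countable[OF _ P\<nu>.countable_support]) simp
    hence "UNIV - {x. measure \<nu> {x} \<noteq> 0} \<in> sets borel" by auto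
    moreover have "UNIV - {x. measure \<nu> {x} \<noteq> 0} = Nat" by (auto simp: Nat_def)
    ultimately show ?thesis by simp
  qed
  define A where "A = (\<lambda>k::nat. {x \<in> Nat. f x < 1 - \<alpha> - 1 / Suc k})"
  have Am: "A k \<in> sets borel" for k
  proof -
    have "A k = Nat \<inter> {x \<in> space borel. f x < 1 - \<alpha> - 1 / Suc k}" by (auto simp: A_def)
    also have "\<dots> \<in> sets borel" using Natm fm by measurable
    finally show ?thesis .
  qed
  have Anull: "A k \<in> null_sets \<nu>" for k
  proof (rule ccontr)
    assume nn: "A k \<notin> null_sets \<nu>"
    define \<delta> where "\<delta> = 1 / real (Suc k)"
    have \<delta>0: "\<delta> > 0" unfolding \<delta>_def by simp
    have "emeasure \<nu> (A k) \<noteq> 0" using nn Am[of k] s\<nu> by (auto simp: null_sets_def)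
    hence "measure \<nu> (A k) \<noteq> 0" by (simp add: P\<nu>.emeasure_eq_measure)
    hence posA: "measure \<nu> (A k) > 0" using measure_nonneg[of \<nu> "A k"] by linarith
    have na: "measure \<nu> {x} = 0" if "x \<in> A k" for x using that by (simp add: A_def Nat_def)
    have eps: "\<delta> / (real n + 1) > 0" using \<delta>0 by simp
    obtain Bs where Bs: "Bs \<in> sets borel" "Bs \<subseteq> A k" "0 < measure \<nu> Bs" "measure \<nu> Bs < \<delta> / (real n + 1)"
      using small_set[OF P\<nu>.finite_measure_axioms s\<nu> Am posA na eps] by blast
    define b where "b = measure \<nu> Bs"
    have b0: "0 < b" using Bs by (simp add: b_def)
    have kb: "ennreal ((1-\<alpha>) * b) \<le>
       (\<integral>\<^sup>+x. indicator Bs x * emeasure D\<mu> {D\<in>space D\<mu>. Lhat D x = 0} \<partial>\<nu>) + ennreal (real n * b * b)"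
      using key[OF PXC Lm Lpos cov adm Bs(1)] unfolding b_def \<nu>_def D\<mu>_def .
    have "(\<integral>\<^sup>+x. indicator Bs x * emeasure D\<mu> {D\<in>space D\<mu>. Lhat D x = 0} \<partial>\<nu>)
        \<le> (\<integral>\<^sup>+x. ennreal (1 - \<alpha> - \<delta>) * indicator Bs x \<partial>\<nu>)"
    proof (rule nn_integral_mono)
      fix x
      show "indicator Bs x * emeasure D\<mu> {D\<in>space D\<mu>. Lhat D x = 0} \<le> ennreal (1 - \<alpha> - \<delta>) * indicator Bs x"
      proof (cases "x \<in> Bs")
        case True
        hence "f x < 1 - \<alpha> - \<delta>" using Bs(2) by (auto simp: A_def \<delta>_def)
        hence "emeasure D\<mu> {D\<in>space D\<mu>. Lhat D x = 0} \<le> ennreal (1 - \<alpha> - \<delta>)"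
          unfolding f_def PD.emeasure_eq_measure by (intro ennreal_leI) simp
        thus ?thesis using True by simp
      qed simp
    qed
    also have "\<dots> = ennreal (1 - \<alpha> - \<delta>) * emeasure \<nu> Bs"
      by (rule nn_integral_cmult_indicator) (simp add: s\<nu> Bs)
    also have "emeasure \<nu> Bs = ennreal b" by (simp add: b_def P\<nu>.emeasure_eq_measure)
    finally have "(\<integral>\<^sup>+x. indicator Bs x * emeasure D\<mu> {D\<in>space D\<mu>. Lhat D x = 0} \<partial>\<nu>) + ennreal (real n * b * b)
       \<le> ennreal (1 - \<alpha> - \<delta>) * ennreal b + ennreal (real n * b * b)" by (rule add_right_mono)
    with kb have le1: "ennreal ((1-\<alpha>) * b) \<le> ennreal (1 - \<alpha> - \<delta>) * ennreal b + ennreal (real n * b * b)"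
      by (rule order_trans)
    have "Bs \<noteq> {}" using b0 by (auto simp: b_def)
    then obtain x0 where "x0 \<in> Bs" by blast
    hence "f x0 < 1 - \<alpha> - \<delta>" using Bs(2) by (auto simp: A_def \<delta>_def)
    hence c0: "0 < 1 - \<alpha> - \<delta>" using f0[of x0] by simp
    have eq: "ennreal (1 - \<alpha> - \<delta>) * ennreal b + ennreal (real n * b * b) = ennreal ((1 - \<alpha> - \<delta>) * b + real n * b * b)"
      using c0 b0 by (simp add: ennreal_mult ennreal_plus)
    have rhs0: "0 \<le> (1 - \<alpha> - \<delta>) * b + real n * b * b" using c0 b0 by simp
    have "ennreal ((1-\<alpha>) * b) \<le> ennreal ((1 - \<alpha> - \<delta>) * b + real n * b * b)"
      using le1 unfolding eq .
    hence "(1-\<alpha>) * b \<le> (1 - \<alpha> - \<delta>) * b + real n * b * b"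
      using ennreal_le_iff[OF rhs0] by blast
    hence "\<delta> * b \<le> real n * b * b" by (simp add: algebra_simps)
    hence "\<delta> \<le> real n * b" using b0 by (simp add: mult.commute mult_le_cancel_left_pos)
    moreover have "real n * b \<le> (real n + 1) * b" using b0 by (simp add: algebra_simps)
    moreover have "(real n + 1) * b < \<delta>" using Bs(4) unfolding b_def[symmetric]
      by (simp add: field_simps)
    ultimately show False by simp
  qed
  have "(\<Union>k. A k) \<in> null_sets \<nu>" using Anull by blast
  moreover have "{x\<in>space \<nu>. \<not> (measure \<nu> {x} = 0 \<longrightarrow> f x \<ge> 1 - \<alpha>)} \<subseteq> (\<Union>k. A k)"
  proof
    fix x assume "x \<in> {x\<in>space \<nu>. \<not> (measure \<nu> {x} = 0 \<longrightarrow> f x \<ge> 1 - \<alpha>)}"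
    hence x: "measure \<nu> {x} = 0" "f x < 1 - \<alpha>" by auto
    obtain k :: nat where "1 / Suc k < 1 - \<alpha> - f x"
      using reals_Archimedean[of "1 - \<alpha> - f x"] x(2) by (metis inverse_eq_divide of_nat_Suc diff_gt_0_iff_gt)
    hence "x \<in> A k" using x by (auto simp: A_def Nat_def)
    thus "x \<in> (\<Union>k. A k)" by blast
  qed
  ultimately have "AE x in \<nu>. measure \<nu> {x} = 0 \<longrightarrow> f x \<ge> 1 - \<alpha>" by (rule AE_I')
  thus "AE x in distr PXC borel fst.
              measure (distr PXC borel fst) {x} = 0 \<longrightarrow>
              measure (data_law n \<mu>) {D \<in> space (data_law n \<mu>). Lhat D x = 0} \<ge> 1 - \<alpha>"
    unfolding \<nu>_def f_def D\<mu>_def .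
qed

end
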